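(* For every real $u>1$, $$\sigma(u)=1+\sum_{0<k<u}P_k(u),\qquad \rho(u)=1+\sum_{0<k<u}(-1)^kP_k(u),$$ where the sums run over integers $k$ with $0<k<u$.
   Context: $\rho$ is the Dickman function: continuous on $[0,\infty)$, $\rho(u)=1$ on $[0,1]$, $u\rho'(u)=-\rho(u-1)$ for $u>1$. $\omega$ is the Buchstab function: continuous on $[1,\infty)$, $u\omega(u)=1$ on $[1,2]$, $u\omega'(u)=\omega(u-1)-\omega(u)$ for $u>2$; and $\sigma(u)=(u+1)\omega(u+1)$. The functions $P_k$ are defined by $P_0(u)=1$ for $u\ge 0$, and for integers $k\ge1$, $P_k:[k,\infty)\to\mathbb{R}$ is the function with $P_k(k)=0$ and $uP_k'(u)=P_{k-1}(u-1)$ for $u\ge k$, i.e. $P_k(u)=\int_k^u P_{k-1}(x-1)\,\frac{dx}{x}$. *)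

theory Defs
  imports "HOL-Analysis.Analysis"
begin

text \<open>Characterisation of the Dickman function (values on [0,inf) matter only).\<close>
definition is_dickman :: "(real \<Rightarrow> real) \<Rightarrow> bool" where
  "is_dickman f \<longleftrightarrow> continuous_on {0..} f \<and> (\<forall>u\<in>{0..1}. f u = 1) \<and>
     (\<forall>u>1. (f has_real_derivative (- f (u - 1) / u)) (at u))"

definition dickman_rho :: "real \<Rightarrow> real" where
  "dickman_rho u = (THE y. \<exists>f. is_dickman f \<and> f u = y)"

text \<open>Characterisation of the Buchstab function (values on [1,inf) matter only).\<close>
definition is_buchstab :: "(real \<Rightarrow> real) \<Rightarrow> bool" where
  "is_buchstab f \<longleftrightarrow> continuous_on {1..} f \<and> (\<forall>u\<in>{1..2}. u * f u = 1) \<and>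
     (\<forall>u>2. (f has_real_derivative ((f (u - 1) - f u) / u)) (at u))"

definition buchstab_omega :: "real \<Rightarrow> real" where
  "buchstab_omega u = (THE y. \<exists>f. is_buchstab f \<and> f u = y)"

definition buch_sigma :: "real \<Rightarrow> real" where
  "buch_sigma u = (u + 1) * buchstab_omega (u + 1)"

text \<open>P_0 = 1, P_k(u) = int_k^u P_{k-1}(x-1) dx/x (only meaningful for u \<ge> k).\<close>
fun Pk :: "nat \<Rightarrow> real \<Rightarrow> real" where
  "Pk 0 u = 1"
| "Pk (Suc k) u = integral {real (Suc k)..u} (\<lambda>x. Pk k (x - 1) / x)"

end

theory Submission
  imports Defs
begin

lemma Pk_zero: "x \<le> real (Suc k) \<Longrightarrow> Pk (Suc k) x = 0"
proof -
  assume a: "x \<le> real (Suc k)"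
  have "integral {a..x} f = 0" if "x \<le> (a::real)" for a f
    using that by (cases "x = a") auto
  then show ?thesis using a by simp
qed

lemma Pk_zero': "0 < k \<Longrightarrow> x \<le> real k \<Longrightarrow> Pk k x = 0"
  by (metis Pk_zero gr0_conv_Suc)

lemma isCont_transf:
  assumes "isCont f x" "open S" "x \<in> S" "\<And>y. y \<in> S \<Longrightarrow> f y = g y"
  shows "isCont g x"
proof -
  have "g x = f x" using assms by simp
  then show ?thesis using assms Lim_transform_within_open[of f "f x" x UNIV S g]
    unfolding isCont_def by auto
qed

lemma Pk1: "Pk 1 x = ln (max 1 x)"
proof (cases "x \<ge> 1")
  case True
  have "((\<lambda>y. 1 / y) has_integral ln x - ln 1) {1..x}"
  proof (rule fundamental_theorem_of_calculus)
    fix y assume "y \<in> {1..x}"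
    then have "(ln has_real_derivative 1 / y) (at y)" by (intro DERIV_ln_divide) auto
    then show "(ln has_vector_derivative 1 / y) (at y within {1..x})"
      by (simp add: has_real_derivative_iff_has_vector_derivative[symmetric] has_field_derivative_at_within)
  qed (use True in auto)
  then show ?thesis using True by (simp add: integral_unique max_def)
next
  case False
  then show ?thesis using Pk_zero[of x 0] by (simp add: max_def)
qed

lemma g_cont:
  assumes C: "\<forall>x\<ge>0. isCont (Pk k) x"
  shows "continuous_on {1..b} (\<lambda>x. Pk k (x - 1) / x)"
proof (intro continuous_at_imp_continuous_on ballI)
  fix x assume x: "x \<in> {1..b}"
  have "isCont (\<lambda>x. x - 1) x" by simp
  moreover have "isCont (Pk k) (x - 1)" using C x by auto
  ultimately have "isCont (\<lambda>x. Pk k (x - 1)) x" by (rule isCont_o2)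
  then show "isCont (\<lambda>x. Pk k (x - 1) / x) x" using x by (intro isCont_divide) auto
qed

lemma Pk_int:
  assumes C: "\<forall>x\<ge>0. isCont (Pk k) x" and x: "x \<ge> 1"
  shows "Pk (Suc k) x = integral {1..x} (\<lambda>y. Pk k (y - 1) / y)"
proof (cases "k = 0")
  case True then show ?thesis by simp
next
  case False
  let ?g = "\<lambda>y. Pk k (y - 1) / y"
  have z: "integral {1..b} ?g = 0" if "b \<le> real k + 1" for b
  proof -
    have "integral {1..b} ?g = integral {1..b} (\<lambda>_. 0::real)"
      using False that by (intro integral_cong) (auto simp: Pk_zero')
    then show ?thesis by simp
  qed
  show ?thesis
  proof (cases "x \<le> real k + 1")
    case True
    then show ?thesis using z Pk_zero[of x k] by simp
  next
    case False
    have "integral {1..real k + 1} ?g + integral {real k + 1..x} ?g = integral {1..x} ?g"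
      using False by (intro Henstock_Kurzweil_Integration.integral_combine[of 1 "real k + 1" x] integrable_continuous_interval g_cont C) auto
    then show ?thesis using z[of "real k + 1"] by (simp add: add.commute)
  qed
qed

lemma Pk_deriv:
  assumes C: "\<forall>x\<ge>0. isCont (Pk k) x" and x: "x > 1"
  shows "(Pk (Suc k) has_real_derivative Pk k (x - 1) / x) (at x)"
proof -
  let ?g = "\<lambda>y. Pk k (y - 1) / y"
  have "((\<lambda>u. integral {1..u} ?g) has_vector_derivative ?g x) (at x within {1..x+1})"
    using x by (intro integral_has_vector_derivative g_cont C) auto
  then have "((\<lambda>u. integral {1..u} ?g) has_real_derivative ?g x) (at x)"
    using x by (simp add: at_within_Icc_at has_real_derivative_iff_has_vector_derivative)
  then show ?thesis
    by (rule has_field_derivative_transform_within_open[where S="{1<..}"])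
       (use x C Pk_int[OF C] in \<open>auto simp del: Pk.simps\<close>)
qed

lemma Pk_cont: "x \<ge> 0 \<Longrightarrow> isCont (Pk k) x"
proof (induction k arbitrary: x)
  case 0 then show ?case by simp
next
  case (Suc k)
  have C: "\<forall>x\<ge>0. isCont (Pk k) x" using Suc.IH by auto
  consider "x > 1" | "x < 1" | "x = 1" by linarith
  then show ?case
  proof cases
    case 1 then show ?thesis using Pk_deriv[OF C] DERIV_isCont by blast
  next
    case 2
    show ?thesis
      by (rule isCont_transf[where f="\<lambda>_. 0" and S="{..<1}"]) (use 2 Pk_zero in auto)
  next
    case 3
    show ?thesis
    proof (cases "k = 0")
      case True
      have "Pk (Suc k) = (\<lambda>x. ln (max 1 x))" using True Pk1 by auto
      then show ?thesis using 3 by (auto intro!: continuous_intros)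
    next
      case False
      show ?thesis
        by (rule isCont_transf[where f="\<lambda>_. 0" and S="{..<2}"]) (use 3 False Pk_zero in auto)
    qed
  qed
qed


definition SS :: "real \<Rightarrow> real \<Rightarrow> real" where
  "SS c y = (\<Sum>k::nat | 0 < k \<and> real k < y. c ^ k * Pk k y)"

definition GG :: "real \<Rightarrow> nat \<Rightarrow> real \<Rightarrow> real" where
  "GG c N y = (\<Sum>j<N. c ^ Suc j * Pk (Suc j) y)"

lemma SS_GG: assumes "y < real N + 1" shows "SS c y = GG c N y"
proof -
  let ?A = "{k::nat. 0 < k \<and> real k < y}"
  let ?f = "\<lambda>k. c ^ k * Pk k y"
  have sub: "?A \<subseteq> Suc ` {..<N}"
  proof
    fix k assume "k \<in> ?A"
    then have "0 < k" "real k < real N + 1" using assms by auto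
    then have "k = Suc (k - 1)" "k - 1 < N" by linarith+
    then show "k \<in> Suc ` {..<N}" by blast
  qed
  have "sum ?f ?A = sum ?f (Suc ` {..<N})"
  proof (rule sum.mono_neutral_left)
    show "\<forall>i\<in>Suc ` {..<N} - ?A. ?f i = 0"
    proof
      fix i assume "i \<in> Suc ` {..<N} - ?A"
      then obtain j where "i = Suc j" "\<not> real (Suc j) < y" by auto
      then show "?f i = 0" using Pk_zero[of y j] by (simp del: Pk.simps)
    qed
  qed (use sub in auto)
  also have "\<dots> = GG c N y" unfolding GG_def by (subst sum.reindex) auto
  finally show ?thesis unfolding SS_def .
qed

lemma SS_small: "y \<le> 1 \<Longrightarrow> SS c y = 0"
proof -
  assume "y \<le> 1"
  then have e: "{k::nat. 0 < k \<and> real k < y} = {}" by auto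
  show ?thesis unfolding SS_def by (subst e) simp
qed

lemma GG_cont: "isCont (GG c N) x"
proof (cases "x \<ge> 0")
  case True
  then show ?thesis unfolding GG_def
    by (intro continuous_intros Pk_cont)
next
  case False
  have "isCont (\<lambda>_. 0::real) x" by simp
  then show ?thesis
    by (rule isCont_transf[where S="{..<0}"])
       (use False in \<open>auto simp: GG_def Pk_zero simp del: Pk.simps\<close>)
qed

lemma SS_cont: "isCont (SS c) x"
proof -
  define N where "N = nat \<lceil>x\<rceil>"
  have "x \<le> real N" unfolding N_def by linarith
  show ?thesis
  proof (rule isCont_transf[where S="{..<real N + 1}" and f="GG c N"])
    show "isCont (GG c N) x" by (rule GG_cont)
  qed (use \<open>x \<le> real N\<close> SS_GG in auto)
qed

lemma GG_deriv: "x > 1 \<Longrightarrow>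
  (GG c N has_real_derivative (\<Sum>j<N. c ^ Suc j * (Pk j (x - 1) / x))) (at x)"
  unfolding GG_def
  by (intro DERIV_sum DERIV_cmult Pk_deriv) (auto intro: Pk_cont)

lemma SS_deriv:
  assumes x: "x > 1"
  shows "(SS c has_real_derivative c * (1 + SS c (x - 1)) / x) (at x)"
proof -
  define M where "M = nat \<lceil>x\<rceil>"
  have xM: "x \<le> real M" unfolding M_def by linarith
  have "(\<Sum>j<Suc M. c ^ Suc j * (Pk j (x - 1) / x))
      = c / x + (\<Sum>i<M. c ^ Suc (Suc i) * (Pk (Suc i) (x - 1) / x))"
    by (subst sum.lessThan_Suc_shift) simp
  also have "(\<Sum>i<M. c ^ Suc (Suc i) * (Pk (Suc i) (x - 1) / x))
      = c / x * GG c M (x - 1)"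
    unfolding GG_def sum_distrib_left by (intro sum.cong) auto
  also have "GG c M (x - 1) = SS c (x - 1)" using xM SS_GG[of "x - 1" M c] by simp
  finally have eq0: "(\<Sum>j<Suc M. c ^ Suc j * (Pk j (x - 1) / x)) = c / x + c / x * SS c (x - 1)" .
  have "c / x + c / x * SS c (x - 1) = c * (1 + SS c (x - 1)) / x" by (simp add: add_divide_distrib distrib_left)
  then have eq: "(\<Sum>j<Suc M. c ^ Suc j * (Pk j (x - 1) / x)) = c * (1 + SS c (x - 1)) / x"
    using eq0 by (simp add: add_divide_distrib)
  have "(GG c (Suc M) has_real_derivative c * (1 + SS c (x - 1)) / x) (at x)"
    using GG_deriv[OF x, of c "Suc M"] eq by simp
  then show ?thesis
    by (rule has_field_derivative_transform_within_open[where S="{..<real (Suc M) + 1}"])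
       (use xM in \<open>auto simp: SS_GG[of _ "Suc M"]\<close>)
qed

definition FD :: "real \<Rightarrow> real" where "FD y = 1 + SS (-1) y"

lemma FD_dickman: "is_dickman FD"
  unfolding is_dickman_def
proof (intro conjI ballI allI impI)
  show "continuous_on {0..} FD" unfolding FD_def
    by (intro continuous_at_imp_continuous_on ballI continuous_intros SS_cont)
next
  fix u :: real assume "u \<in> {0..1}"
  then show "FD u = 1" by (simp add: FD_def SS_small)
next
  fix u :: real assume u: "u > 1"
  have "((\<lambda>y. 1 + SS (-1) y) has_real_derivative 0 + (-1) * (1 + SS (-1) (u - 1)) / u) (at u)"
    by (intro DERIV_add DERIV_const SS_deriv u)
  then show "(FD has_real_derivative - FD (u - 1) / u) (at u)"
    unfolding FD_def by (simp add: fun_eq_iff)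
qed

lemma dickman_unique:
  assumes f: "is_dickman f" and g: "is_dickman g" and u: "u \<ge> 0"
  shows "f u = g u"
proof -
  have "\<forall>u. 0 \<le> u \<and> u \<le> real n + 1 \<longrightarrow> f u = g u" for n
  proof (induction n)
    case 0 then show ?case using f g by (auto simp: is_dickman_def)
  next
    case (Suc n)
    show ?case
    proof (intro allI impI)
      fix u assume u: "0 \<le> u \<and> u \<le> real (Suc n) + 1"
      show "f u = g u"
      proof (cases "u \<le> real n + 1")
        case True then show ?thesis using Suc u by auto
      next
        case False
        let ?h = "\<lambda>x. f x - g x"
        have "?h u = ?h (real n + 1)"
        proof (rule DERIV_isconst_end[of "real n + 1" u ?h])
          show "real n + 1 < u" using False by simp
          have "continuous_on {0..} ?h" using f g by (intro continuous_on_diff) (auto simp: is_dickman_def)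
          then show "continuous_on {real n + 1..u} ?h" by (rule continuous_on_subset) auto
        next
          fix x assume x: "real n + 1 < x" "x < u"
          have e: "f (x - 1) = g (x - 1)" using Suc x u by auto
          have "(?h has_real_derivative - f (x - 1) / x - - g (x - 1) / x) (at x)"
            using f g x by (intro DERIV_diff) (auto simp: is_dickman_def)
          then show "(?h has_real_derivative 0) (at x)" using e by simp
        qed
        then show ?thesis using Suc by auto
      qed
    qed
  qed
  note H = this
  have "u \<le> real (nat \<lceil>u\<rceil>) + 1" by linarith
  then show ?thesis using H[of "nat \<lceil>u\<rceil>"] u by auto
qed

lemma dickman_rho_eq: assumes "u \<ge> 0" shows "dickman_rho u = FD u"
  unfolding dickman_rho_def
proof (rule the_equality)
  show "\<exists>f. is_dickman f \<and> f u = FD u" using FD_dickman by blast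
next
  fix y assume "\<exists>f. is_dickman f \<and> f u = y"
  then show "y = FD u" using FD_dickman dickman_unique assms by blast
qed

definition WB :: "real \<Rightarrow> real" where "WB v = (1 + SS 1 (v - 1)) / v"

lemma WB_buchstab: "is_buchstab WB"
  unfolding is_buchstab_def
proof (intro conjI ballI allI impI)
  show "continuous_on {1..} WB"
  proof (intro continuous_at_imp_continuous_on ballI)
    fix v :: real assume v: "v \<in> {1..}"
    have "isCont (\<lambda>v. SS 1 (v - 1)) v"
      by (rule isCont_o2[OF _ SS_cont]) simp
    then show "isCont WB v" unfolding WB_def using v by (intro continuous_intros) auto
  qed
next
  fix u :: real assume "u \<in> {1..2}"
  then show "u * WB u = 1" by (simp add: WB_def SS_small)
next
  fix v :: real assume v: "v > 2"
  have d1: "((\<lambda>v. SS 1 (v - 1)) has_real_derivative (1 * (1 + SS 1 (v - 1 - 1)) / (v - 1)) * 1) (at v)"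
    by (rule DERIV_chain2[OF SS_deriv]) (use v in \<open>auto intro!: derivative_eq_intros\<close>)
  have d2: "((\<lambda>v. (1 + SS 1 (v - 1)) / v) has_real_derivative
      ((0 + (1 * (1 + SS 1 (v - 1 - 1)) / (v - 1)) * 1) * v - (1 + SS 1 (v - 1)) * 1) / (v * v)) (at v)"
    by (intro DERIV_divide DERIV_add DERIV_const d1 DERIV_ident) (use v in auto)
  have eq: "((0 + (1 * (1 + SS 1 (v - 1 - 1)) / (v - 1)) * 1) * v - (1 + SS 1 (v - 1)) * 1) / (v * v)
      = (WB (v - 1) - WB v) / v"
    using v by (simp add: WB_def field_simps)
  show "(WB has_real_derivative (WB (v - 1) - WB v) / v) (at v)"
    using d2 unfolding eq by (simp add: WB_def[abs_def])
qed

lemma buchstab_unique: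
  assumes f: "is_buchstab f" and g: "is_buchstab g" and u: "u \<ge> 1"
  shows "f u = g u"
proof -
  have "\<forall>u. 1 \<le> u \<and> u \<le> real n + 2 \<longrightarrow> f u = g u" for n
  proof (induction n)
    case 0
    show ?case
    proof (intro allI impI)
      fix u :: real assume u: "1 \<le> u \<and> u \<le> real 0 + 2"
      then have "u * f u = u * g u" using f g by (auto simp: is_buchstab_def)
      then show "f u = g u" using u by simp
    qed
  next
    case (Suc n)
    show ?case
    proof (intro allI impI)
      fix u assume u: "1 \<le> u \<and> u \<le> real (Suc n) + 2"
      show "f u = g u"
      proof (cases "u \<le> real n + 2")
        case True then show ?thesis using Suc u by auto
      next
        case False
        let ?h = "\<lambda>x. x * (f x - g x)"
        have "?h u = ?h (real n + 2)"
        proof (rule DERIV_isconst_end[of "real n + 2" u ?h])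
          show "real n + 2 < u" using False by simp
          have "continuous_on {1..} (\<lambda>x. f x - g x)" using f g
            by (intro continuous_on_diff) (auto simp: is_buchstab_def)
          then have "continuous_on {real n + 2..u} (\<lambda>x. f x - g x)"
            by (rule continuous_on_subset) auto
          then show "continuous_on {real n + 2..u} ?h"
            by (intro continuous_on_mult continuous_on_id)
        next
          fix x assume x: "real n + 2 < x" "x < u"
          have e: "f (x - 1) = g (x - 1)" using Suc x u by auto
          have "(?h has_real_derivative 1 * (f x - g x) + ((f (x - 1) - f x) / x - (g (x - 1) - g x) / x) * x) (at x)"
            using f g x by (intro DERIV_mult DERIV_ident DERIV_diff) (auto simp: is_buchstab_def)
          moreover have "1 * (f x - g x) + ((f (x - 1) - f x) / x - (g (x - 1) - g x) / x) * x = 0"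
            using e x by (simp add: field_simps)
          ultimately show "(?h has_real_derivative 0) (at x)" by simp
        qed
        then have "u * (f u - g u) = 0" using Suc by auto
        then show ?thesis using u by simp
      qed
    qed
  qed
  note H = this
  have "u \<le> real (nat \<lceil>u\<rceil>) + 1" by linarith
  then show ?thesis using H[of "nat \<lceil>u\<rceil>"] u by auto
qed

lemma buchstab_omega_eq: assumes "v \<ge> 1" shows "buchstab_omega v = WB v"
  unfolding buchstab_omega_def
proof (rule the_equality)
  show "\<exists>f. is_buchstab f \<and> f v = WB v" using WB_buchstab by blast
next
  fix y assume "\<exists>f. is_buchstab f \<and> f v = y"
  then show "y = WB v" using WB_buchstab buchstab_unique assms by blast
qed

theorem mainTheorem3:
  fixes u :: real
  assumes "u > 1"
  shows "buch_sigma u = 1 + (\<Sum>k::nat | 0 < k \<and> real k < u. Pk k u) \<and>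
         dickman_rho u = 1 + (\<Sum>k::nat | 0 < k \<and> real k < u. (-1) ^ k * Pk k u)"
proof
  have "buch_sigma u = (u + 1) * WB (u + 1)"
    unfolding buch_sigma_def using assms by (simp add: buchstab_omega_eq)
  also have "\<dots> = 1 + SS 1 u" using assms by (simp add: WB_def)
  finally show "buch_sigma u = 1 + (\<Sum>k::nat | 0 < k \<and> real k < u. Pk k u)"
    by (simp add: SS_def)
next
  show "dickman_rho u = 1 + (\<Sum>k::nat | 0 < k \<and> real k < u. (-1) ^ k * Pk k u)"
    using assms by (simp add: dickman_rho_eq FD_def SS_def)
qed

end
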